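(* Let $A\in\mathrm{GL}_{n}(\mathbb{Z})$. If the group $G=\mathbb{Z}^{n}\rtimes_{A}\mathbb{Z}$ admits a length function which is both discrete and purely positive, then $G$ is virtually abelian.
   Context: $\mathbb{Z}^{n}\rtimes_{A}\mathbb{Z}$ is the semidirect product in which a generator of $\mathbb{Z}$ acts on $\mathbb{Z}^n$ by $A$. A length function on a group $G$ is a function $l:G\to[0,\infty)$ such that $l(g^{n})=|n|\,l(g)$ for all $g\in G,n\in\mathbb{Z}$; $l(hgh^{-1})=l(g)$ for all $g,h$; and $l(ab)\leq l(a)+l(b)$ whenever $a,b$ commute. It is purely positive if $l(g)>0$ for every element of infinite order, and discrete if there is $c>0$ with $l(g)>c$ whenever $l(g)\neq 0$. *)

theory Defs
  imports "HOL-Analysis.Analysis" "HOL-Algebra.Algebra"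
begin

definition mat_npow :: "int^'n^'n \<Rightarrow> nat \<Rightarrow> int^'n^'n" where
  "mat_npow A m = ((\<lambda>M. M ** A) ^^ m) (mat 1)"

definition mat_ipow :: "int^'n^'n \<Rightarrow> int \<Rightarrow> int^'n^'n" where
  "mat_ipow A k = (if 0 \<le> k then mat_npow A (nat k) else mat_npow (matrix_inv A) (nat (- k)))"

text \<open>The semidirect product Z^n \<rtimes>_A Z: elements (v,k), with
  (v,k)(w,m) = (v + A^k w, k + m); the generator (0,1) of Z acts on Z^n by A.\<close>
definition sdprod :: "int^'n^'n \<Rightarrow> ((int^'n) \<times> int) monoid" where
  "sdprod A = \<lparr> carrier = UNIV,
                mult = (\<lambda>(v, k) (w, m). (v + mat_ipow A k *v w, k + m)),
                one = (0, 0) \<rparr>"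

definition length_function :: "('a, 'b) monoid_scheme \<Rightarrow> ('a \<Rightarrow> real) \<Rightarrow> bool" where
  "length_function G l \<longleftrightarrow>
     (\<forall>g\<in>carrier G. 0 \<le> l g) \<and>
     (\<forall>g\<in>carrier G. \<forall>n::int. l (g [^]\<^bsub>G\<^esub> n) = \<bar>real_of_int n\<bar> * l g) \<and>
     (\<forall>g\<in>carrier G. \<forall>h\<in>carrier G. l (h \<otimes>\<^bsub>G\<^esub> g \<otimes>\<^bsub>G\<^esub> inv\<^bsub>G\<^esub> h) = l g) \<and>
     (\<forall>a\<in>carrier G. \<forall>b\<in>carrier G. a \<otimes>\<^bsub>G\<^esub> b = b \<otimes>\<^bsub>G\<^esub> a \<longrightarrow>
         l (a \<otimes>\<^bsub>G\<^esub> b) \<le> l a + l b)"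

definition infinite_order :: "('a, 'b) monoid_scheme \<Rightarrow> 'a \<Rightarrow> bool" where
  "infinite_order G g \<longleftrightarrow> (\<forall>n::nat. 0 < n \<longrightarrow> g [^]\<^bsub>G\<^esub> n \<noteq> \<one>\<^bsub>G\<^esub>)"

definition purely_positive :: "('a, 'b) monoid_scheme \<Rightarrow> ('a \<Rightarrow> real) \<Rightarrow> bool" where
  "purely_positive G l \<longleftrightarrow> (\<forall>g\<in>carrier G. infinite_order G g \<longrightarrow> 0 < l g)"

definition discrete_length :: "('a, 'b) monoid_scheme \<Rightarrow> ('a \<Rightarrow> real) \<Rightarrow> bool" where
  "discrete_length G l \<longleftrightarrow> (\<exists>c>0. \<forall>g\<in>carrier G. l g \<noteq> 0 \<longrightarrow> c < l g)"

definition virtually_abelian :: "('a, 'b) monoid_scheme \<Rightarrow> bool" where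
  "virtually_abelian G \<longleftrightarrow>
     (\<exists>H. subgroup H G \<and> finite (rcosets\<^bsub>G\<^esub> H) \<and>
          (\<forall>x\<in>H. \<forall>y\<in>H. x \<otimes>\<^bsub>G\<^esub> y = y \<otimes>\<^bsub>G\<^esub> x))"

end

theory Submission
  imports Defs
begin

lemma mat_npow_0[simp]: "mat_npow A 0 = mat 1"
  by (simp add: mat_npow_def)

lemma mat_npow_Suc[simp]: "mat_npow A (Suc k) = mat_npow A k ** A"
  by (simp add: mat_npow_def)

lemma mat_npow_add: "mat_npow A (a + b) = mat_npow A a ** mat_npow A b"
  by (induction b) (simp_all add: matrix_mul_assoc)

lemma mat_npow_mult_id:
  assumes "mat_npow M m = mat 1"
  shows "mat_npow M (m * j) = mat 1"
proof (induction j)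
  case (Suc j)
  have "m * Suc j = m * j + m" by simp
  then show ?case using Suc assms by (simp only: mat_npow_add) simp
qed simp

lemma mat_npow_pow: "mat_npow (mat_npow A r) j = mat_npow A (r * j)"
proof (induction j)
  case (Suc j)
  have "r * Suc j = r * j + r" by simp
  then show ?case using Suc by (simp only: mat_npow_add) simp
qed simp

lemma sd_mult: "(v, k) \<otimes>\<^bsub>sdprod A\<^esub> (w, m) = (v + mat_ipow A k *v w, k + m)"
  by (simp add: sdprod_def)

lemma sd_one: "\<one>\<^bsub>sdprod A\<^esub> = (0, 0)"
  by (simp add: sdprod_def)

lemma sd_carrier: "carrier (sdprod A) = UNIV"
  by (simp add: sdprod_def)

lemma mat_ipow_0[simp]: "mat_ipow A 0 = mat 1"
  by (simp add: mat_ipow_def)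

lemma mat_ipow_1[simp]: "mat_ipow A 1 = A"
  by (simp add: mat_ipow_def)

lemma sd_nat_pow: "(v, 0) [^]\<^bsub>sdprod A\<^esub> (n::nat) = (of_nat n *s v, 0)"
  by (induction n) (auto simp: sd_mult sd_one vec_eq_iff algebra_simps)

lemma sd_inv0: "inv\<^bsub>sdprod A\<^esub> (v, 0) = (- v, 0)"
  unfolding m_inv_def
  by (rule the_equality) (auto simp: sd_mult sd_one sd_carrier add_eq_0_iff2)

lemma sd_inv_t:
  assumes "invertible A"
  shows "inv\<^bsub>sdprod A\<^esub> (0, 1) = (0, -1)"
  unfolding m_inv_def
  by (rule the_equality) (auto simp: sd_mult sd_one sd_carrier)

lemma int_pow_m1: "x [^]\<^bsub>G\<^esub> (-1::int) = inv\<^bsub>G\<^esub> (x [^]\<^bsub>G\<^esub> (1::nat))"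
  by (simp add: int_pow_def nat_pow_def)

lemma mv_axis: "((M::int^'n^'m) *v axis j 1) $ i = M $ i $ j"
  by (simp add: matrix_vector_mult_def axis_def if_distrib cong: if_cong)

lemma finite_ball_L:
  fixes L :: "int^'n \<Rightarrow> real"
  assumes neg: "\<And>v. L (- v) = L v"
    and sub: "\<And>v w. L (v + w) \<le> L v + L w"
    and hom: "\<And>v q. L (of_nat q *s v) = real q * L v"
    and pos: "\<And>v. v \<noteq> 0 \<Longrightarrow> c < L v"
    and c: "c > 0"
  shows "finite {v. L v \<le> R}"
proof (rule ccontr)
  assume inf: "infinite {v. L v \<le> R}"
  define S where "S = {v. L v \<le> R}"
  define q :: nat where "q = nat \<lceil>2 * R / c\<rceil> + 1"
  have qpos: "q > 0" by (simp add: q_def)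
  have "2 * R / c < real q" unfolding q_def by linarith
  then have qc: "2 * R < real q * c" using c by (simp add: divide_less_eq)
  define \<phi> where "\<phi> v = (\<lambda>i. v $ i mod int q)" for v :: "int^'n"
  have "\<phi> ` S \<subseteq> Pi\<^sub>E UNIV (\<lambda>_. {0..<int q})"
    using qpos by (auto simp: \<phi>_def PiE_UNIV_domain)
  moreover have "finite (Pi\<^sub>E UNIV (\<lambda>_::'n. {0..<int q}))"
    by (rule finite_PiE) auto
  ultimately have "finite (\<phi> ` S)" by (rule finite_subset)
  then have "\<not> inj_on \<phi> S" using inf S_def finite_imageD by blast
  then obtain v w where vw: "v \<in> S" "w \<in> S" "v \<noteq> w" "\<phi> v = \<phi> w"
    unfolding inj_on_def by blast
  define u where "u = (\<chi> i. (v $ i - w $ i) div int q)"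
  have dv: "int q dvd (v $ i - w $ i)" for i
    using fun_cong[OF vw(4), of i] by (simp add: \<phi>_def mod_eq_dvd_iff)
  have vwu: "v - w = of_nat q *s u"
    using dv by (simp add: u_def vec_eq_iff)
  have "u \<noteq> 0" using vw(3) vwu by auto
  then have "real q * c < real q * L u" using pos qpos by simp
  also have "\<dots> = L (v - w)" using hom vwu by simp
  also have "\<dots> \<le> L v + L (- w)" using sub[of v "- w"] by simp
  also have "\<dots> \<le> 2 * R" using vw(1,2) neg[of w] by (simp add: S_def)
  finally show False using qc by simp
qed

lemma matrix_inv_props:
  assumes "invertible (A::int^'n^'n)"
  shows "A ** matrix_inv A = mat 1" "matrix_inv A ** A = mat 1"
proof -
  from assms obtain A' where "A ** A' = mat 1 \<and> A' ** A = mat 1"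
    unfolding invertible_def by blast
  then have "A ** matrix_inv A = mat 1 \<and> matrix_inv A ** A = mat 1"
    unfolding matrix_inv_def by (rule someI)
  then show "A ** matrix_inv A = mat 1" "matrix_inv A ** A = mat 1" by auto
qed

lemma mat_npow_comm: "mat_npow A a ** A = A ** mat_npow A a"
proof -
  have "mat_npow A (a + 1) = mat_npow A (1 + a)" by (simp add: add.commute)
  then show ?thesis by (simp only: mat_npow_add) simp
qed

lemma mat_npow_cancel:
  assumes "B ** A = mat 1"
  shows "mat_npow B a ** mat_npow A a = mat 1"
proof (induction a)
  case (Suc a)
  have "mat_npow B (Suc a) ** mat_npow A (Suc a) = (mat_npow B a ** B) ** (A ** mat_npow A a)"
    by (simp add: mat_npow_comm)
  also have "\<dots> = mat_npow B a ** (B ** A) ** mat_npow A a"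
    by (simp add: matrix_mul_assoc)
  finally show ?case using Suc assms by simp
qed simp

lemma finite_order:
  fixes A :: "int^'n^'n" and L :: "int^'n \<Rightarrow> real"
  assumes inv: "invertible A"
    and fin: "\<And>R. finite {v. L v \<le> R}"
    and nonneg: "\<And>v. 0 \<le> L v"
    and inva: "\<And>v. L (A *v v) = L v"
  shows "\<exists>m>0. mat_npow A m = mat 1"
proof -
  define R where "R = (\<Sum>j\<in>UNIV. L (axis j 1))"
  define S where "S = {v. L v \<le> R}"
  have Lk: "L (mat_npow A k *v v) = L v" for k v
  proof (induction k arbitrary: v)
    case (Suc k)
    have "mat_npow A (Suc k) *v v = mat_npow A k *v (A *v v)"
      by (simp add: matrix_vector_mul_assoc)
    then show ?case using Suc inva by simp
  qed simp
  have Rj: "L (axis j 1) \<le> R" for j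
    unfolding R_def by (rule member_le_sum) (auto simp: nonneg)
  define \<psi> where "\<psi> M = (\<lambda>j. M *v axis j 1)" for M :: "int^'n^'n"
  have "\<psi> ` range (mat_npow A) \<subseteq> Pi\<^sub>E UNIV (\<lambda>_. S)"
    using Rj by (auto simp: \<psi>_def PiE_UNIV_domain S_def Lk)
  moreover have "finite (Pi\<^sub>E UNIV (\<lambda>_::'n. S))"
    by (rule finite_PiE) (auto simp: S_def fin)
  ultimately have f1: "finite (\<psi> ` range (mat_npow A))" by (rule finite_subset)
  have "inj \<psi>"
  proof (rule injI)
    fix M N assume "\<psi> M = \<psi> N"
    then have "(M *v axis j 1) $ i = (N *v axis j 1) $ i" for i j
      by (simp add: \<psi>_def fun_eq_iff)
    then show "M = N" by (simp add: mv_axis vec_eq_iff)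
  qed
  then have "finite (range (mat_npow A))"
    using f1 by (meson finite_imageD inj_on_subset subset_UNIV)
  then have "\<not> inj (mat_npow A)"
    using finite_imageD infinite_UNIV_nat by blast
  then obtain a b where ab: "a \<noteq> b" "mat_npow A a = mat_npow A b"
    unfolding inj_def by blast
  obtain a b where ab2: "a < b" "mat_npow A a = mat_npow A b"
    using ab by (metis linorder_neqE_nat)
  define B where "B = matrix_inv A"
  have BA: "B ** A = mat 1" using matrix_inv_props[OF inv] B_def by simp
  have "mat_npow A (a + (b - a)) = mat_npow A a ** mat_npow A (b - a)"
    by (rule mat_npow_add)
  then have "mat_npow A b = mat_npow A a ** mat_npow A (b - a)"
    using ab2 by simp
  then have "mat_npow B a ** mat_npow A a = mat_npow B a ** (mat_npow A a ** mat_npow A (b - a))"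
    using ab2 by simp
  then have "mat 1 = mat_npow A (b - a)"
    using mat_npow_cancel[OF BA, of a] by (simp add: matrix_mul_assoc)
  then show ?thesis using ab2 by (intro exI[of _ "b - a"]) auto
qed

lemma ipow_id:
  fixes A :: "int^'n^'n"
  assumes inv: "invertible A" and m: "m > 0" "mat_npow A m = mat 1"
    and d: "int m dvd k"
  shows "mat_ipow A k = mat 1"
proof -
  define B where "B = matrix_inv A"
  have AB: "A ** B = mat 1" using matrix_inv_props[OF inv] B_def by simp
  have "Suc (m - 1) = m" using m by simp
  then have h: "mat_npow A (m - 1) ** A = mat 1"
    using m mat_npow_Suc[of A "m - 1"] by simp
  have "B = (mat_npow A (m - 1) ** A) ** B" using h by simp
  also have "\<dots> = mat_npow A (m - 1) ** (A ** B)" by (simp add: matrix_mul_assoc)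
  also have "\<dots> = mat_npow A (m - 1)" using AB by simp
  finally have "B = mat_npow A (m - 1)" .
  then have "mat_npow B m = mat_npow A (m * (m - 1))"
    by (simp add: mat_npow_pow mult.commute)
  also have "\<dots> = mat 1" using m by (simp add: mat_npow_mult_id)
  finally have Bm: "mat_npow B m = mat 1" .
  obtain j where kj: "k = int m * j" using d by blast
  show ?thesis
  proof (cases "0 \<le> k")
    case True
    then have "j \<ge> 0" using kj m by (simp add: zero_le_mult_iff)
    then have "nat k = m * nat j" using kj by (simp add: nat_mult_distrib)
    then show ?thesis using True m by (simp add: mat_ipow_def mat_npow_mult_id)
  next
    case False
    then have "j < 0" using kj m by (smt (verit) mult_nonneg_nonneg of_nat_0_le_iff)
    have "nat (- k) = nat (int m * (- j))" using kj by simp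
    also have "\<dots> = nat (int m) * nat (- j)" by (rule nat_mult_distrib) simp
    finally have "nat (- k) = m * nat (- j)" by simp
    then show ?thesis using False Bm by (simp add: mat_ipow_def mat_npow_mult_id B_def)
  qed
qed

lemma virt_from_order:
  fixes A :: "int^'n^'n"
  assumes inv: "invertible A" and m: "m > 0" "mat_npow A m = mat 1"
  shows "virtually_abelian (sdprod A)"
proof -
  define H :: "((int^'n) \<times> int) set" where "H = {(v, k). int m dvd k}"
  have I: "int m dvd k \<Longrightarrow> mat_ipow A k = mat 1" for k
    using ipow_id[OF inv m] by blast
  have invH: "inv\<^bsub>sdprod A\<^esub> (v, k) = (- v, - k)" if "int m dvd k" for v k
    unfolding m_inv_def
  proof (rule the_equality)
    show "(- v, - k) \<in> carrier (sdprod A) \<and>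
      (v, k) \<otimes>\<^bsub>sdprod A\<^esub> (- v, - k) = \<one>\<^bsub>sdprod A\<^esub> \<and>
      (- v, - k) \<otimes>\<^bsub>sdprod A\<^esub> (v, k) = \<one>\<^bsub>sdprod A\<^esub>"
      using I[OF that] I[of "-k"] that by (simp add: sd_mult sd_one sd_carrier)
  next
    fix y assume y: "y \<in> carrier (sdprod A) \<and> (v, k) \<otimes>\<^bsub>sdprod A\<^esub> y = \<one>\<^bsub>sdprod A\<^esub> \<and>
      y \<otimes>\<^bsub>sdprod A\<^esub> (v, k) = \<one>\<^bsub>sdprod A\<^esub>"
    obtain w j where yw: "y = (w, j)" by force
    from y have "w + mat_ipow A j *v v = 0" "j + k = 0" by (auto simp: yw sd_mult sd_one)
    moreover have "j = - k" using \<open>j + k = 0\<close> by simp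
    moreover have "mat_ipow A j = mat 1" using that I[of j] \<open>j = - k\<close> by simp
    ultimately show "y = (- v, - k)" by (auto simp: yw add_eq_0_iff2)
  qed
  have sg: "subgroup H (sdprod A)"
  proof
    show "H \<subseteq> carrier (sdprod A)" by (simp add: sd_carrier)
    show "x \<otimes>\<^bsub>sdprod A\<^esub> y \<in> H" if "x \<in> H" "y \<in> H" for x y
      using that by (auto simp: H_def sd_mult)
    show "\<one>\<^bsub>sdprod A\<^esub> \<in> H" by (simp add: H_def sd_one)
    show "inv\<^bsub>sdprod A\<^esub> x \<in> H" if "x \<in> H" for x
      using that invH by (auto simp: H_def)
  qed
  have comm: "\<forall>x\<in>H. \<forall>y\<in>H. x \<otimes>\<^bsub>sdprod A\<^esub> y = y \<otimes>\<^bsub>sdprod A\<^esub> x"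
  proof (intro ballI)
    fix x y assume "x \<in> H" "y \<in> H"
    then obtain v k w j where xy: "x = (v, k)" "y = (w, j)" "int m dvd k" "int m dvd j"
      by (auto simp: H_def)
    show "x \<otimes>\<^bsub>sdprod A\<^esub> y = y \<otimes>\<^bsub>sdprod A\<^esub> x"
      using I[OF xy(3)] I[OF xy(4)] by (simp add: xy sd_mult add.commute)
  qed
  have coset: "H #>\<^bsub>sdprod A\<^esub> (v, k) = {(u, i). i mod int m = k mod int m}" for v k
  proof
    show "H #>\<^bsub>sdprod A\<^esub> (v, k) \<subseteq> {(u, i). i mod int m = k mod int m}"
      by (auto simp: r_coset_def H_def sd_mult)
    show "{(u, i). i mod int m = k mod int m} \<subseteq> H #>\<^bsub>sdprod A\<^esub> (v, k)"
    proof clarify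
      fix u i assume "i mod int m = k mod int m"
      then have d: "int m dvd (i - k)" by (simp add: mod_eq_dvd_iff)
      have "(u - v, i - k) \<otimes>\<^bsub>sdprod A\<^esub> (v, k) = (u, i)"
        using I[OF d] by (simp add: sd_mult)
      moreover have "(u - v, i - k) \<in> H" using d by (simp add: H_def)
      ultimately show "(u, i) \<in> H #>\<^bsub>sdprod A\<^esub> (v, k)"
        unfolding r_coset_def by force
    qed
  qed
  have "RCOSETS (sdprod A) H \<subseteq> (\<lambda>r. {(u, i). i mod int m = r}) ` {0..<int m}"
  proof
    fix Cs assume "Cs \<in> RCOSETS (sdprod A) H"
    then obtain v k where Cs: "Cs = H #>\<^bsub>sdprod A\<^esub> (v, k)"
      unfolding RCOSETS_def by auto
    have "k mod int m \<in> {0..<int m}" using m by simp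
    then show "Cs \<in> (\<lambda>r. {(u, i). i mod int m = r}) ` {0..<int m}"
      unfolding Cs coset by blast
  qed
  then have "finite (RCOSETS (sdprod A) H)" by (rule finite_subset) simp
  then show ?thesis unfolding virtually_abelian_def using sg comm by blast
qed

theorem lemma11:
  fixes A :: "int^'n^'n"
    and l :: "(int^'n) \<times> int \<Rightarrow> real"
  assumes "invertible A"
    and "length_function (sdprod A) l"
    and "discrete_length (sdprod A) l"
    and "purely_positive (sdprod A) l"
  shows "virtually_abelian (sdprod A)"
proof -
  define L where "L v = l (v, 0)" for v
  note lf = assms(2)[unfolded length_function_def sd_carrier]
  obtain c where c: "c > 0" "\<And>g. l g \<noteq> 0 \<Longrightarrow> c < l g"
    using assms(3) unfolding discrete_length_def sd_carrier by blast
  have nonneg: "0 \<le> L v" for v using lf L_def by simp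
  have neg: "L (- v) = L v" for v
  proof -
    have "l ((v, 0) [^]\<^bsub>sdprod A\<^esub> (-1::int)) = \<bar>real_of_int (-1)\<bar> * l (v, 0)"
      using lf by blast
    then show ?thesis by (simp add: L_def int_pow_m1 sd_nat_pow sd_inv0 sd_one sd_mult)
  qed
  have hom: "L (of_nat q *s v) = real q * L v" for v q
  proof -
    have "l ((v, 0) [^]\<^bsub>sdprod A\<^esub> (int q)) = \<bar>real_of_int (int q)\<bar> * l (v, 0)"
      using lf by blast
    then show ?thesis by (simp add: L_def int_pow_int sd_nat_pow)
  qed
  have sub: "L (v + w) \<le> L v + L w" for v w
  proof -
    have "(v, 0) \<otimes>\<^bsub>sdprod A\<^esub> (w, 0) = (w, 0) \<otimes>\<^bsub>sdprod A\<^esub> (v, 0)"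
      by (simp add: sd_mult add.commute)
    then have "l ((v, 0) \<otimes>\<^bsub>sdprod A\<^esub> (w, 0)) \<le> l (v, 0) + l (w, 0)"
      using lf by blast
    then show ?thesis by (simp add: L_def sd_mult)
  qed
  have pos: "c < L v" if "v \<noteq> 0" for v
  proof -
    have "infinite_order (sdprod A) (v, 0)"
      unfolding infinite_order_def using that
      by (auto simp: sd_nat_pow sd_one vec_eq_iff)
    then have "0 < l (v, 0)" using assms(4) unfolding purely_positive_def sd_carrier by blast
    then show ?thesis using c L_def by simp
  qed
  have inva: "L (A *v v) = L v" for v
  proof -
    have "l ((0, 1) \<otimes>\<^bsub>sdprod A\<^esub> (v, 0) \<otimes>\<^bsub>sdprod A\<^esub> inv\<^bsub>sdprod A\<^esub> (0, 1)) = l (v, 0)"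
      using lf by blast
    then show ?thesis using sd_inv_t[OF assms(1)] by (simp add: L_def sd_mult)
  qed
  have fin: "finite {v. L v \<le> R}" for R
    by (rule finite_ball_L[OF neg sub hom pos c(1)])
  obtain m where "m > 0" "mat_npow A m = mat 1"
    using finite_order[OF assms(1) fin nonneg inva] by blast
  then show ?thesis using virt_from_order[OF assms(1)] by blast
qed

end
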